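(* Suppose the ST problem for $(D_{SC},F,B)$ has a positive answer. Then there is a solution to it, which necessarily consists of paths $\pi(v)$, one starting at each source $v$ of $D_{SC}$, such that for every $i\in\mathcal U$ and $j\in I_i$ we have $V(\pi(u_{i,j}))\subseteq V(C_i)$.
   Context: Snow Team problem (ST): given a digraph $D=(\mathcal V,\mathcal A)$ whose underlying graph is connected, and $F:\mathcal V\to\{0,1\}$, $B:\mathcal V\to\mathbb N$, with $\mathbf k_B=\sum_vB(v)$: do there exist $\mathbf k_B$ directed walks, exactly $B(v)$ of which start at each $v$, such that, letting $H$ be the subgraph consisting of the vertices and arcs of these walks, all vertices of $F^{-1}(1)$ lie in one connected component of the underlying undirected graph of $H$? Such walks form a solution. Construction: $\mathcal U=\{1,\dots,n\}$, $\mathcal S=\{S_1,\dots,S_m\}$ with $S_t\subseteq\mathcal U$, $\bigcup_tS_t=\mathcal U$, and $1\le k\le m$. Write $S_t=\{x_1<\dots<x_{\ell(t)}\}$ and $I_i=\{j: i\in S_j\}$. The digraph $D_{SC}$ has vertices $u_i$ ($i\in\mathcal U$); $u_{i,j},u'_{i,j},v_{i,j},v'_{i,j}$ ($i\in\mathcal U$, $j\in I_i$); and $z,z_1,\dots,z_k$. Its arcs are those of the vertical paths $P_{i,j}=(u_{i,j},u_i,u'_{i,j},v_{i,j},v'_{i,j})$ ($i\in\mathcal U,j\in I_i$), of the horizontal paths $P^h_t=(z,v_{x_1,t},v_{x_2,t},\dots,v_{x_{\ell(t)},t})$ ($t\in\{1,\dots,m\}$, with $x_1<\dots<x_{\ell(t)}$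 the elements of $S_t$), and the arcs $(z_l,z)$ for $l=1,\dots,k$. The $i$-th element component $C_i$ is the subgraph induced by $\bigcup_{j\in I_i}V(P_{i,j})$. Set $F(v)=1$ for all vertices $v$, and $B(v)=1$ if $v$ is a source of $D_{SC}$ (i.e. $v\in\{u_{i,j}\}\cup\{z_1,\dots,z_k\}$) and $B(v)=0$ otherwise. Since $D_{SC}$ is acyclic, every solution consists of one directed path $\pi(v)$ starting at each source $v$. *)

theory Defs
  imports Main
begin

definition is_walk :: "'v set \<Rightarrow> ('v \<times> 'v) set \<Rightarrow> 'v list \<Rightarrow> bool" where
  "is_walk V A p \<longleftrightarrow> p \<noteq> [] \<and> set p \<subseteq> V \<and> (\<forall>i. Suc i < length p \<longrightarrow> (p ! i, p ! Suc i) \<in> A)"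

definition walk_arcs :: "'v list \<Rightarrow> ('v \<times> 'v) set" where
  "walk_arcs p = set (zip p (tl p))"

text \<open>A family of walks: W v r is the r-th walk starting at v (r < B v), so exactly
  B v walks start at v, k_B walks in total.\<close>
definition H_verts :: "'v set \<Rightarrow> ('v \<Rightarrow> nat) \<Rightarrow> ('v \<Rightarrow> nat \<Rightarrow> 'v list) \<Rightarrow> 'v set" where
  "H_verts V B W = (\<Union>v\<in>V. \<Union>r\<in>{..<B v}. set (W v r))"

definition H_arcs :: "'v set \<Rightarrow> ('v \<Rightarrow> nat) \<Rightarrow> ('v \<Rightarrow> nat \<Rightarrow> 'v list) \<Rightarrow> ('v \<times> 'v) set" where
  "H_arcs V B W = (\<Union>v\<in>V. \<Union>r\<in>{..<B v}. walk_arcs (W v r))"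

definition st_solution ::
  "'v set \<Rightarrow> ('v \<times> 'v) set \<Rightarrow> ('v \<Rightarrow> nat) \<Rightarrow> ('v \<Rightarrow> nat) \<Rightarrow> ('v \<Rightarrow> nat \<Rightarrow> 'v list) \<Rightarrow> bool" where
  "st_solution V A F B W \<longleftrightarrow>
     (\<forall>v\<in>V. \<forall>r<B v. is_walk V A (W v r) \<and> hd (W v r) = v) \<and>
     (\<forall>x\<in>V. \<forall>y\<in>V. F x = 1 \<and> F y = 1 \<longrightarrow>
        x \<in> H_verts V B W \<and> y \<in> H_verts V B W \<and>
        (x, y) \<in> (H_arcs V B W \<union> (H_arcs V B W)\<inverse>)\<^sup>*)"

datatype vtx = Ui nat | Uij nat nat | Uij' nat nat | Vij nat nat | Vij' nat nat | Zc | Zl nat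

definition idx_I :: "nat \<Rightarrow> (nat \<Rightarrow> nat set) \<Rightarrow> nat \<Rightarrow> nat set" where
  "idx_I m S i = {j \<in> {1..m}. i \<in> S j}"

definition vert_path :: "nat \<Rightarrow> nat \<Rightarrow> vtx list" where
  "vert_path i j = [Uij i j, Ui i, Uij' i j, Vij i j, Vij' i j]"

definition horiz_path :: "(nat \<Rightarrow> nat set) \<Rightarrow> nat \<Rightarrow> vtx list" where
  "horiz_path S t = Zc # map (\<lambda>x. Vij x t) (sorted_list_of_set (S t))"

definition dsc_verts :: "nat \<Rightarrow> nat \<Rightarrow> (nat \<Rightarrow> nat set) \<Rightarrow> nat \<Rightarrow> vtx set" where
  "dsc_verts n m S k =
     Ui ` {1..n} \<union>
     (\<Union>i\<in>{1..n}. \<Union>j\<in>idx_I m S i. {Uij i j, Uij' i j, Vij i j, Vij' i j}) \<union>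
     {Zc} \<union> Zl ` {1..k}"

definition dsc_arcs :: "nat \<Rightarrow> nat \<Rightarrow> (nat \<Rightarrow> nat set) \<Rightarrow> nat \<Rightarrow> (vtx \<times> vtx) set" where
  "dsc_arcs n m S k =
     (\<Union>i\<in>{1..n}. \<Union>j\<in>idx_I m S i. walk_arcs (vert_path i j)) \<union>
     (\<Union>t\<in>{1..m}. walk_arcs (horiz_path S t)) \<union>
     (\<lambda>l. (Zl l, Zc)) ` {1..k}"

definition comp_C :: "nat \<Rightarrow> (nat \<Rightarrow> nat set) \<Rightarrow> nat \<Rightarrow> vtx set" where
  "comp_C m S i = (\<Union>j\<in>idx_I m S i. set (vert_path i j))"

definition dsc_sources :: "nat \<Rightarrow> nat \<Rightarrow> (nat \<Rightarrow> nat set) \<Rightarrow> nat \<Rightarrow> vtx set" where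
  "dsc_sources n m S k = (\<Union>i\<in>{1..n}. (\<lambda>j. Uij i j) ` idx_I m S i) \<union> Zl ` {1..k}"

definition dsc_F :: "vtx \<Rightarrow> nat" where
  "dsc_F v = 1"

definition dsc_B :: "nat \<Rightarrow> nat \<Rightarrow> (nat \<Rightarrow> nat set) \<Rightarrow> nat \<Rightarrow> vtx \<Rightarrow> nat" where
  "dsc_B n m S k v = (if v \<in> dsc_sources n m S k then 1 else 0)"

end

theory Submission
  imports Defs
begin



lemma walk_arcs_idx: "(x,y) \<in> walk_arcs l \<longleftrightarrow> (\<exists>q. Suc q < length l \<and> l!q = x \<and> l!Suc q = y)"
  unfolding walk_arcs_def in_set_zip
proof (auto simp: nth_tl)
  fix q assume "q < length l - Suc 0" then show "\<exists>qa. Suc qa < length l \<and> l ! qa = l ! q \<and> l ! Suc qa = l ! Suc q"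
    by (intro exI[of _ q]) auto
qed

lemma walk_arcs_vert: "walk_arcs (vert_path i j) = {(Uij i j, Ui i), (Ui i, Uij' i j), (Uij' i j, Vij i j), (Vij i j, Vij' i j)}"
  by (auto simp: walk_arcs_def vert_path_def)

lemma horiz_len: "length (horiz_path S t) = Suc (length (sorted_list_of_set (S t)))"
  by (simp add: horiz_path_def)

lemma horiz_0: "horiz_path S t ! 0 = Zc" by (simp add: horiz_path_def)

lemma horiz_nth: assumes "finite (S t)" "0 < q" "q < length (horiz_path S t)"
  shows "\<exists>a\<in>S t. horiz_path S t ! q = Vij a t"
proof -
  obtain q' where q: "q = Suc q'" using assms(2) by (cases q) auto
  have "q' < length (sorted_list_of_set (S t))" using assms(3) q by (simp add: horiz_path_def)
  then have "sorted_list_of_set (S t) ! q' \<in> S t" using assms(1) by (metis nth_mem set_sorted_list_of_set)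
  then show ?thesis using q \<open>q' < _\<close> by (auto simp: horiz_path_def)
qed

lemma horiz_distinct: "distinct (horiz_path S t)"
  by (auto simp: horiz_path_def distinct_map inj_on_def)

lemma arcs_cases:
  assumes "(x,y) \<in> dsc_arcs n m S k"
  shows "(\<exists>i j. i\<in>{1..n} \<and> j\<in>idx_I m S i \<and> (x,y) \<in> {(Uij i j, Ui i), (Ui i, Uij' i j), (Uij' i j, Vij i j), (Vij i j, Vij' i j)})
    \<or> (\<exists>t\<in>{1..m}. (x,y) \<in> walk_arcs (horiz_path S t))
    \<or> (\<exists>l\<in>{1..k}. x = Zl l \<and> y = Zc)"
  using assms unfolding dsc_arcs_def walk_arcs_vert by blast

lemma horiz_arc_snd:
  assumes "t \<in> {1..m}" "\<forall>t\<in>{1..m}. S t \<subseteq> {1..n}" "(x,y) \<in> walk_arcs (horiz_path S t)"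
  shows "\<exists>a\<in>S t. y = Vij a t"
proof -
  have f: "finite (S t)" using assms(1,2) by (meson finite_atLeastAtMost finite_subset)
  obtain q where q: "Suc q < length (horiz_path S t)" "horiz_path S t ! Suc q = y"
    using assms(3) walk_arcs_idx by metis
  show ?thesis using horiz_nth[of S t "Suc q", OF f _ q(1)] q(2) by auto
qed

lemma horiz_arc_fst:
  assumes "t \<in> {1..m}" "\<forall>t\<in>{1..m}. S t \<subseteq> {1..n}" "(x,y) \<in> walk_arcs (horiz_path S t)"
  shows "x = Zc \<or> (\<exists>a\<in>S t. x = Vij a t)"
proof -
  have f: "finite (S t)" using assms(1,2) by (meson finite_atLeastAtMost finite_subset)
  obtain q where q: "Suc q < length (horiz_path S t)" "horiz_path S t ! q = x"
    using assms(3) walk_arcs_idx by metis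
  show ?thesis
  proof (cases q)
    case 0 then show ?thesis using q horiz_0 by simp
  next
    case (Suc q') then show ?thesis using horiz_nth[of S t q, OF f] q by auto
  qed
qed

context
  fixes n m k :: nat and S :: "nat \<Rightarrow> nat set"
  assumes S_sub: "\<forall>t\<in>{1..m}. S t \<subseteq> {1..n}"
begin

lemma in_Uij: "(z, Uij i j) \<notin> dsc_arcs n m S k"
  using arcs_cases[of z "Uij i j" n m S k] horiz_arc_snd[OF _ S_sub] by fastforce

lemma in_Zl: "(z, Zl l) \<notin> dsc_arcs n m S k"
  using arcs_cases[of z "Zl l" n m S k] horiz_arc_snd[OF _ S_sub] by fastforce

lemma in_Ui: "(z, Ui i) \<in> dsc_arcs n m S k \<Longrightarrow> \<exists>j. z = Uij i j"
  using arcs_cases[of z "Ui i" n m S k] horiz_arc_snd[OF _ S_sub] by fastforce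

lemma in_Uij': "(z, Uij' i j) \<in> dsc_arcs n m S k \<Longrightarrow> z = Ui i"
  using arcs_cases[of z "Uij' i j" n m S k] horiz_arc_snd[OF _ S_sub] by fastforce

lemma in_Vij': "(z, Vij' i j) \<in> dsc_arcs n m S k \<Longrightarrow> z = Vij i j"
  using arcs_cases[of z "Vij' i j" n m S k] horiz_arc_snd[OF _ S_sub] by fastforce

lemma in_Zc: "(z, Zc) \<in> dsc_arcs n m S k \<Longrightarrow> \<exists>l. z = Zl l"
  using arcs_cases[of z "Zc" n m S k] horiz_arc_snd[OF _ S_sub] by fastforce

lemma in_Vij: "(z, Vij i t) \<in> dsc_arcs n m S k \<Longrightarrow> z = Uij' i t \<or>
   (\<exists>q. Suc q < length (horiz_path S t) \<and> horiz_path S t ! q = z \<and> horiz_path S t ! Suc q = Vij i t)"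
proof -
  assume a: "(z, Vij i t) \<in> dsc_arcs n m S k"
  show ?thesis
  proof (cases "\<exists>t'\<in>{1..m}. (z, Vij i t) \<in> walk_arcs (horiz_path S t')")
    case True
    then obtain t' where t': "t'\<in>{1..m}" "(z, Vij i t) \<in> walk_arcs (horiz_path S t')" by blast
    then have "t' = t" using horiz_arc_snd[OF t'(1) S_sub t'(2)] by auto
    then show ?thesis using t' walk_arcs_idx by metis
  next
    case False
    then show ?thesis using arcs_cases[OF a] by auto
  qed
qed

end


locale dsc =
  fixes n m k :: nat and S :: "nat \<Rightarrow> nat set" and W :: "vtx \<Rightarrow> nat \<Rightarrow> vtx list"
  assumes S_sub: "\<forall>t\<in>{1..m}. S t \<subseteq> {1..n}"
    and sol: "st_solution (dsc_verts n m S k) (dsc_arcs n m S k) dsc_F (dsc_B n m S k) W"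
begin

abbreviation "V \<equiv> dsc_verts n m S k"
abbreviation "A \<equiv> dsc_arcs n m S k"
abbreviation "B \<equiv> dsc_B n m S k"
abbreviation "src \<equiv> dsc_sources n m S k"
abbreviation "Ha \<equiv> H_arcs V B W"
abbreviation "Hv \<equiv> H_verts V B W"

lemma src_V: "src \<subseteq> V"
  unfolding dsc_sources_def dsc_verts_def by auto

lemma B_src: "v \<in> src \<Longrightarrow> B v = 1" by (simp add: dsc_B_def)
lemma B_le: "r < B v \<Longrightarrow> v \<in> src \<and> r = 0" by (simp add: dsc_B_def split: if_splits)

lemma valid: assumes "v \<in> src" shows "is_walk V A (W v 0) \<and> hd (W v 0) = v"
proof -
  have "\<forall>v\<in>V. \<forall>r<B v. is_walk V A (W v r) \<and> hd (W v r) = v" using sol unfolding st_solution_def by blast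
  moreover have "v \<in> V" "0 < B v" using assms src_V B_src by auto
  ultimately show ?thesis by auto
qed

lemma nth0: "v \<in> src \<Longrightarrow> W v 0 ! 0 = v"
  using valid by (metis hd_conv_nth is_walk_def)

lemma arc_in_walk: "v \<in> src \<Longrightarrow> Suc p < length (W v 0) \<Longrightarrow> (W v 0 ! p, W v 0 ! Suc p) \<in> A"
  using valid unfolding is_walk_def by blast

lemma arc_in_Ha: assumes "v \<in> src" "Suc p < length (W v 0)" shows "(W v 0 ! p, W v 0 ! Suc p) \<in> Ha"
proof -
  have 1: "(W v 0 ! p, W v 0 ! Suc p) \<in> walk_arcs (W v 0)" using assms(2) by (auto simp: walk_arcs_idx)
  have 2: "v \<in> V" "0 \<in> {..<B v}" using assms src_V B_src by auto
  show ?thesis unfolding H_arcs_def by (rule UN_I[OF 2(1)], rule UN_I[OF 2(2)], rule 1)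
qed

lemma Ha_walk: assumes "(x,y) \<in> Ha" shows "\<exists>v\<in>src. \<exists>p. Suc p < length (W v 0) \<and> W v 0 ! p = x \<and> W v 0 ! Suc p = y"
proof -
  obtain v r where "v \<in> V" "r < B v" "(x,y) \<in> walk_arcs (W v r)" using assms unfolding H_arcs_def by auto
  then have "v \<in> src" "r = 0" using B_le by auto
  then show ?thesis using \<open>(x,y) \<in> walk_arcs (W v r)\<close> by (auto simp: walk_arcs_idx)
qed

lemma Hv_walk: assumes "x \<in> Hv" shows "\<exists>v\<in>src. \<exists>p. p < length (W v 0) \<and> W v 0 ! p = x"
proof -
  obtain v r where "v \<in> V" "r < B v" "x \<in> set (W v r)" using assms unfolding H_verts_def by auto
  then have "v \<in> src" "r = 0" using B_le by auto
  then show ?thesis using \<open>x \<in> set (W v r)\<close> by (auto simp: in_set_conv_nth)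
qed

lemma V_both: "x \<in> V \<Longrightarrow> y \<in> V \<Longrightarrow> x \<in> Hv \<and> (x, y) \<in> (Ha \<union> Ha\<inverse>)\<^sup>*"
proof -
  have h: "\<forall>x\<in>V. \<forall>y\<in>V. dsc_F x = 1 \<and> dsc_F y = 1 \<longrightarrow> x \<in> Hv \<and> y \<in> Hv \<and> (x, y) \<in> (Ha \<union> Ha\<inverse>)\<^sup>*"
    using sol unfolding st_solution_def by (rule conjunct2)
  have F: "\<And>x. dsc_F x = 1" by (simp add: dsc_F_def)
  show "x \<in> V \<Longrightarrow> y \<in> V \<Longrightarrow> x \<in> Hv \<and> (x, y) \<in> (Ha \<union> Ha\<inverse>)\<^sup>*"
  proof -
    assume "x \<in> V" "y \<in> V"
    then have "dsc_F x = 1 \<and> dsc_F y = 1 \<longrightarrow> x \<in> Hv \<and> y \<in> Hv \<and> (x, y) \<in> (Ha \<union> Ha\<inverse>)\<^sup>*" using h by blast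
    then show ?thesis using F by blast
  qed
qed
lemma V_Hv: "x \<in> V \<Longrightarrow> x \<in> Hv" using V_both by blast
lemma V_conn: "x \<in> V \<Longrightarrow> y \<in> V \<Longrightarrow> (x, y) \<in> (Ha \<union> Ha\<inverse>)\<^sup>*" using V_both by blast

lemma Ha_A: "(x,y) \<in> Ha \<Longrightarrow> (x,y) \<in> A"
  using Ha_walk arc_in_walk by blast

lemma not_src: "Ui i \<notin> src" "Uij' i j \<notin> src" "Vij i j \<notin> src" "Vij' i j \<notin> src" "Zc \<notin> src"
  by (auto simp: dsc_sources_def)

lemma src_Uij: "Uij a j \<in> src \<Longrightarrow> j \<in> idx_I m S a \<and> a \<in> {1..n}"
  by (auto simp: dsc_sources_def)

lemma pred_A: "v \<in> src \<Longrightarrow> 0 < p \<Longrightarrow> p < length (W v 0) \<Longrightarrow> (W v 0 ! (p - 1), W v 0 ! p) \<in> A"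
  using arc_in_walk[of v "p - 1"] by simp

lemma pred_Ha: "v \<in> src \<Longrightarrow> 0 < p \<Longrightarrow> p < length (W v 0) \<Longrightarrow> (W v 0 ! (p - 1), W v 0 ! p) \<in> Ha"
  using arc_in_Ha[of v "p - 1"] by simp

lemma struct_Uij':
  assumes v: "v \<in> src" and p: "p < length (W v 0)" "W v 0 ! p = Uij' a j"
  shows "p = 2 \<and> W v 0 ! 1 = Ui a \<and> (\<exists>j1. v = Uij a j1)"
proof -
  have p0: "p \<noteq> 0"
  proof
    assume "p = 0" then have "v = Uij' a j" using p(2) nth0[OF v] by simp
    then show False using v not_src by simp
  qed
  have e1: "W v 0 ! (p - 1) = Ui a" using pred_A[OF v _ p(1)] p0 p(2) in_Uij'[OF S_sub] by auto
  have p1: "p - 1 \<noteq> 0"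
  proof
    assume "p - 1 = 0" then have "v = Ui a" using e1 nth0[OF v] by simp
    then show False using v not_src by simp
  qed
  obtain j1 where e2: "W v 0 ! (p - 2) = Uij a j1"
    using pred_A[OF v, of "p - 1"] p1 p(1) e1 in_Ui[OF S_sub]
  proof -
    have "(W v 0 ! (p - 1 - 1), W v 0 ! (p - 1)) \<in> A" using pred_A[OF v, of "p - 1"] p1 p(1) by simp
    then have "(W v 0 ! (p - 2), Ui a) \<in> A" using e1 by (simp add: numeral_2_eq_2)
    then show ?thesis using that in_Ui[OF S_sub] by blast
  qed
  have p2: "p - 2 = 0"
  proof (rule ccontr)
    assume "p - 2 \<noteq> 0"
    then have "(W v 0 ! (p - 2 - 1), W v 0 ! (p - 2)) \<in> A" using pred_A[OF v, of "p - 2"] p(1) by simp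
    then show False using e2 in_Uij[OF S_sub] by auto
  qed
  show ?thesis using p0 p1 p2 e1 e2 nth0[OF v]
  proof -
    have "p = 2" using p0 p1 p2 by linarith
    then show ?thesis using e1 e2 nth0[OF v] by auto
  qed
qed


end


context dsc begin

lemma vert_in_V: "i \<in> {1..n} \<Longrightarrow> j \<in> idx_I m S i \<Longrightarrow> x \<in> set (vert_path i j) \<Longrightarrow> x \<in> V"
  unfolding vert_path_def dsc_verts_def by auto

lemma finS: "t \<in> {1..m} \<Longrightarrow> finite (S t)"
  using S_sub by (meson finite_atLeastAtMost finite_subset)

lemma vij_pred:
  assumes v: "v \<in> src" and p: "p < length (W v 0)" "W v 0 ! p = Vij a t"
    and q: "Suc q < length (horiz_path S t)" "horiz_path S t ! Suc q = Vij a t"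
    and nq: "(horiz_path S t ! q, Vij a t) \<notin> Ha"
  shows "p = 3 \<and> W v 0 ! 2 = Uij' a t \<and> (\<exists>j1. v = Uij a j1)"
proof -
  have p0: "p \<noteq> 0"
  proof
    assume "p = 0" then have "v = Vij a t" using p(2) nth0[OF v] by simp
    then show False using v not_src by simp
  qed
  have arcA: "(W v 0 ! (p - 1), Vij a t) \<in> A" using pred_A[OF v _ p(1)] p0 p(2) by auto
  have arcH: "(W v 0 ! (p - 1), Vij a t) \<in> Ha" using pred_Ha[OF v _ p(1)] p0 p(2) by auto
  have e1: "W v 0 ! (p - 1) = Uij' a t"
  proof -
    have "W v 0 ! (p - 1) = Uij' a t \<or>
      (\<exists>q. Suc q < length (horiz_path S t) \<and> horiz_path S t ! q = W v 0 ! (p - 1) \<and> horiz_path S t ! Suc q = Vij a t)"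
      using in_Vij[OF S_sub arcA] .
    moreover have False if q': "Suc q' < length (horiz_path S t)" "horiz_path S t ! q' = W v 0 ! (p - 1)"
        "horiz_path S t ! Suc q' = Vij a t" for q'
    proof -
      have "Suc q' = Suc q" using nth_eq_iff_index_eq[OF horiz_distinct q'(1) q(1)] q'(3) q(2) by simp
      then show False using q' arcH nq by simp
    qed
    ultimately show ?thesis by blast
  qed
  have "p - 1 = 2 \<and> W v 0 ! 1 = Ui a \<and> (\<exists>j1. v = Uij a j1)"
    using struct_Uij'[OF v _ e1] p(1) by simp
  moreover then have "p = 3" using p0 by arith
  ultimately show ?thesis using e1 by simp
qed

lemma pigeon:
  assumes a: "a \<in> {1..n}" and j: "j1 \<in> idx_I m S a" "j2 \<in> idx_I m S a" "t \<in> idx_I m S a"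
    and e: "W (Uij a j1) 0 ! 2 = Uij' a t" "W (Uij a j2) 0 ! 2 = Uij' a t"
  shows "j1 = j2"
proof -
  let ?I = "idx_I m S a"
  have ex: "\<exists>j'\<in>?I. W (Uij a j') 0 ! 2 = Uij' a j" if jI: "j \<in> ?I" for j
  proof -
    have "Uij' a j \<in> V" using vert_in_V[OF a jI] by (simp add: vert_path_def)
    then obtain v p where vp: "v \<in> src" "p < length (W v 0)" "W v 0 ! p = Uij' a j"
      using Hv_walk[OF V_Hv] by blast
    from struct_Uij'[OF vp] obtain j' where j': "p = 2" "v = Uij a j'" by blast
    then have "j' \<in> ?I" using vp(1) src_Uij by simp
    then show ?thesis using vp j' by auto
  qed
  define f where "f j = (SOME j'. j' \<in> ?I \<and> W (Uij a j') 0 ! 2 = Uij' a j)" for j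
  have f: "f j \<in> ?I \<and> W (Uij a (f j)) 0 ! 2 = Uij' a j" if "j \<in> ?I" for j
    unfolding f_def using someI_ex[OF ex[OF that, unfolded Bex_def]] .
  have fin: "finite ?I" unfolding idx_I_def by simp
  have sub: "f ` ?I \<subseteq> ?I"
  proof (rule image_subsetI)
    fix j assume "j \<in> ?I" then show "f j \<in> ?I" using f by blast
  qed
  have inj: "inj_on f ?I"
  proof (rule inj_onI)
    fix x y assume hx: "x \<in> ?I" and hy: "y \<in> ?I" and fxy: "f x = f y"
    have 1: "W (Uij a (f x)) 0 ! 2 = Uij' a x" using f[OF hx] by (rule conjunct2)
    have 2: "W (Uij a (f y)) 0 ! 2 = Uij' a y" using f[OF hy] by (rule conjunct2)
    have "Uij' a x = W (Uij a (f x)) 0 ! 2" using 1 by (rule sym)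
    also have "\<dots> = W (Uij a (f y)) 0 ! 2" using fxy by (rule arg_cong)
    also have "\<dots> = Uij' a y" by (rule 2)
    finally show "x = y" by simp
  qed
  have surj: "f ` ?I = ?I" using endo_inj_surj[OF fin sub inj] .
  have g: "jj = f t" if "jj \<in> ?I" "W (Uij a jj) 0 ! 2 = Uij' a t" for jj
  proof -
    have "jj \<in> f ` ?I" using surj that(1) by simp
    then obtain j where j: "j \<in> ?I" "jj = f j" by (rule imageE) simp
    then have "Uij' a j = Uij' a t" using f[OF j(1)] that(2) by simp
    then show ?thesis using j by simp
  qed
  have "j1 = f t" using g j(1) e(1) by blast
  moreover have "j2 = f t" using g j(2) e(2) by blast
  ultimately show ?thesis by simp
qed

lemma horiz_back:
  assumes t: "t \<in> {1..m}"
  shows "Suc q < length (horiz_path S t) \<Longrightarrow> (horiz_path S t ! q, horiz_path S t ! Suc q) \<in> Ha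
     \<Longrightarrow> (horiz_path S t ! 0, horiz_path S t ! 1) \<in> Ha"
proof (induction q)
  case 0 then show ?case by simp
next
  case (Suc q)
  let ?h = "horiz_path S t"
  have fin: "finite (S t)" using finS[OF t] .
  have step: "(?h ! q, ?h ! Suc q) \<in> Ha"
  proof (rule ccontr)
    assume nq: "(?h ! q, ?h ! Suc q) \<notin> Ha"
    obtain a where a: "a \<in> S t" "?h ! Suc q = Vij a t"
      using horiz_nth[of S t "Suc q", OF fin] Suc.prems(1) by auto
    obtain b where b: "?h ! Suc (Suc q) = Vij b t"
      using horiz_nth[of S t "Suc (Suc q)", OF fin] Suc.prems(1) by auto
    have ain: "a \<in> {1..n}" using a(1) S_sub t by blast
    have tI: "t \<in> idx_I m S a" using t a(1) unfolding idx_I_def by simp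
    have q1: "Suc q < length ?h" using Suc.prems(1) by simp
    have nq': "(?h ! q, Vij a t) \<notin> Ha" using nq a(2) by simp
    obtain v1 p1 where w1: "v1 \<in> src" "Suc p1 < length (W v1 0)" "W v1 0 ! p1 = ?h ! Suc q"
        "W v1 0 ! Suc p1 = ?h ! Suc (Suc q)"
      using Ha_walk[OF Suc.prems(2)] by blast
    have pl: "p1 < length (W v1 0)" using w1(2) by simp
    have pe: "W v1 0 ! p1 = Vij a t" using w1(3) a(2) by simp
    have "p1 = 3 \<and> W v1 0 ! 2 = Uij' a t \<and> (\<exists>j1. v1 = Uij a j1)"
      using vij_pred[OF w1(1) pl pe q1 a(2) nq'] .
    then obtain j1 where j1: "p1 = 3" "W v1 0 ! 2 = Uij' a t" "v1 = Uij a j1" by blast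
    have "Vij' a t \<in> V" using vert_in_V[OF ain tI] by (simp add: vert_path_def)
    then obtain v2 p2 where w2: "v2 \<in> src" "p2 < length (W v2 0)" "W v2 0 ! p2 = Vij' a t"
      using Hv_walk[OF V_Hv] by blast
    have p20: "p2 \<noteq> 0"
    proof
      assume "p2 = 0" then have "v2 = Vij' a t" using w2(3) nth0[OF w2(1)] by simp
      then show False using w2(1) not_src by simp
    qed
    have "(W v2 0 ! (p2 - 1), Vij' a t) \<in> A" using pred_A[OF w2(1) _ w2(2)] p20 w2(3) by auto
    then have e: "W v2 0 ! (p2 - 1) = Vij a t" using in_Vij'[OF S_sub] by blast
    have pl2: "p2 - 1 < length (W v2 0)" using w2(2) by simp
    have "p2 - 1 = 3 \<and> W v2 0 ! 2 = Uij' a t \<and> (\<exists>j1. v2 = Uij a j1)"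
      using vij_pred[OF w2(1) pl2 e q1 a(2) nq'] .
    then obtain j2 where j2: "p2 = 4" "W v2 0 ! 2 = Uij' a t" "v2 = Uij a j2" by auto
    have "j1 = j2"
      using pigeon[OF ain _ _ tI] j1 j2 w1(1) w2(1) src_Uij by blast
    then have "W v1 0 ! 4 = W v2 0 ! 4" using j1 j2 by simp
    moreover have "W v1 0 ! 4 = Vij b t" using w1(4) j1(1) b by (simp add: numeral_eq_Suc)
    moreover have "W v2 0 ! 4 = Vij' a t" using w2(3) j2(1) by simp
    ultimately show False by simp
  qed
  show ?case using Suc.IH[OF _ step] Suc.prems(1) by simp
qed

definition "Tset = {t \<in> {1..m}. 1 < length (horiz_path S t) \<and> (horiz_path S t ! 0, horiz_path S t ! 1) \<in> Ha}"
definition "cov i \<longleftrightarrow> (\<exists>t\<in>Tset. i \<in> S t)"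

lemma horiz_used: "t \<in> {1..m} \<Longrightarrow> (x,y) \<in> walk_arcs (horiz_path S t) \<Longrightarrow> (x,y) \<in> Ha \<Longrightarrow> t \<in> Tset"
proof -
  assume t: "t \<in> {1..m}" and xy: "(x,y) \<in> walk_arcs (horiz_path S t)" and h: "(x,y) \<in> Ha"
  obtain q where q: "Suc q < length (horiz_path S t)" "horiz_path S t ! q = x" "horiz_path S t ! Suc q = y"
    using xy walk_arcs_idx by metis
  have "(horiz_path S t ! 0, horiz_path S t ! 1) \<in> Ha" using horiz_back[OF t q(1)] q h by simp
  then show ?thesis unfolding Tset_def using t q(1) by simp
qed

definition "G = {v. case v of Ui i \<Rightarrow> cov i | Uij i j \<Rightarrow> cov i | Uij' i j \<Rightarrow> cov i | Vij i j \<Rightarrow> cov i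
   | Vij' i j \<Rightarrow> cov i | Zc \<Rightarrow> True | Zl l \<Rightarrow> True}"

lemma G_arc: assumes "(x,y) \<in> Ha" shows "x \<in> G \<longleftrightarrow> y \<in> G"
proof -
  have xyA: "(x,y) \<in> A" using Ha_A[OF assms] .
  show ?thesis
  proof (cases "\<exists>t\<in>{1..m}. (x,y) \<in> walk_arcs (horiz_path S t)")
    case True
    then obtain t where t: "t \<in> {1..m}" "(x,y) \<in> walk_arcs (horiz_path S t)" by blast
    have T: "t \<in> Tset" using horiz_used[OF t assms] .
    have "x \<in> G" using horiz_arc_fst[OF t(1) S_sub t(2)] T unfolding G_def cov_def by auto
    moreover have "y \<in> G" using horiz_arc_snd[OF t(1) S_sub t(2)] T unfolding G_def cov_def by auto
    ultimately show ?thesis by simp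
  next
    case False
    then show ?thesis using arcs_cases[OF xyA] unfolding G_def by auto
  qed
qed

lemma G_conn: "(x,y) \<in> (Ha \<union> Ha\<inverse>)\<^sup>* \<Longrightarrow> x \<in> G \<Longrightarrow> y \<in> G"
proof (induction rule: rtrancl_induct)
  case base then show ?case .
next
  case (step y z) then show ?case using G_arc by blast
qed

lemma cov_all: "i \<in> {1..n} \<Longrightarrow> cov i"
proof -
  assume i: "i \<in> {1..n}"
  have "Zc \<in> V" "Ui i \<in> V" using i unfolding dsc_verts_def by auto
  then have "(Zc, Ui i) \<in> (Ha \<union> Ha\<inverse>)\<^sup>*" by (rule V_conn)
  moreover have "Zc \<in> G" unfolding G_def by simp
  ultimately have "Ui i \<in> G" by (rule G_conn)
  then show ?thesis unfolding G_def by simp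
qed

lemma T_zl: assumes "t \<in> Tset"
  shows "\<exists>l. Zl l \<in> src \<and> 2 < length (W (Zl l) 0) \<and> W (Zl l) 0 ! 2 = horiz_path S t ! 1"
proof -
  have h: "(Zc, horiz_path S t ! 1) \<in> Ha" using assms unfolding Tset_def by (simp add: horiz_0)
  obtain v p where w: "v \<in> src" "Suc p < length (W v 0)" "W v 0 ! p = Zc" "W v 0 ! Suc p = horiz_path S t ! 1"
    using Ha_walk[OF h] by blast
  have p0: "p \<noteq> 0"
  proof
    assume "p = 0" then have "v = Zc" using w(3) nth0[OF w(1)] by simp
    then show False using w(1) not_src by simp
  qed
  have "(W v 0 ! (p - 1), Zc) \<in> A" using pred_A[OF w(1), of p] p0 w(2,3) by auto
  then obtain l where l: "W v 0 ! (p - 1) = Zl l" using in_Zc[OF S_sub] by blast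
  have p1: "p - 1 = 0"
  proof (rule ccontr)
    assume "p - 1 \<noteq> 0"
    then have "(W v 0 ! (p - 1 - 1), W v 0 ! (p - 1)) \<in> A" using pred_A[OF w(1), of "p - 1"] w(2) by simp
    then show False using l in_Zl[OF S_sub] by auto
  qed
  have "p = 1" using p0 p1 by arith
  moreover have "v = Zl l" using l p1 nth0[OF w(1)] by simp
  ultimately show ?thesis using w by (auto simp: numeral_2_eq_2)
qed

end



definition newW :: "(nat \<Rightarrow> nat set) \<Rightarrow> (vtx \<Rightarrow> nat \<Rightarrow> vtx list) \<Rightarrow> vtx \<Rightarrow> nat \<Rightarrow> vtx list" where
  "newW S W v r = (case v of Uij i j \<Rightarrow> vert_path i j
     | Zl l \<Rightarrow> Zl l # (if 2 < length (W v 0) then (case W v 0 ! 2 of Vij x t \<Rightarrow> horiz_path S t | _ \<Rightarrow> [Zc]) else [Zc])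
     | _ \<Rightarrow> [v])"

lemma walk_arcs_sub: "walk_arcs p \<subseteq> A \<longleftrightarrow> (\<forall>i. Suc i < length p \<longrightarrow> (p ! i, p ! Suc i) \<in> A)"
proof
  assume h: "walk_arcs p \<subseteq> A" show "\<forall>i. Suc i < length p \<longrightarrow> (p ! i, p ! Suc i) \<in> A"
  proof (intro allI impI)
    fix i assume "Suc i < length p"
    then have "(p ! i, p ! Suc i) \<in> walk_arcs p" unfolding walk_arcs_idx by (intro exI[of _ i]) simp
    then show "(p ! i, p ! Suc i) \<in> A" using h by (rule subsetD[rotated])
  qed
next
  assume h: "\<forall>i. Suc i < length p \<longrightarrow> (p ! i, p ! Suc i) \<in> A"
  show "walk_arcs p \<subseteq> A"
  proof (rule subrelI)
    fix x y assume "(x,y) \<in> walk_arcs p"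
    then obtain q where "Suc q < length p" "p ! q = x" "p ! Suc q = y" unfolding walk_arcs_idx by blast
    then show "(x,y) \<in> A" using h by blast
  qed
qed

lemma is_walk_iff: "is_walk V A p \<longleftrightarrow> p \<noteq> [] \<and> set p \<subseteq> V \<and> walk_arcs p \<subseteq> A"
  unfolding is_walk_def walk_arcs_sub by (rule refl)

lemma walk_arcs_Cons: "p \<noteq> [] \<Longrightarrow> walk_arcs (x # p) = insert (x, hd p) (walk_arcs p)"
  unfolding walk_arcs_def by (cases p) auto

lemma walk_conn: "p \<noteq> [] \<Longrightarrow> x \<in> set p \<Longrightarrow> (hd p, x) \<in> (walk_arcs p)\<^sup>*"
proof (induction p)
  case Nil then show ?case by simp
next
  case (Cons a p)
  show ?case
  proof (cases "x = a")
    case True then show ?thesis by simp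
  next
    case False
    then have xp: "x \<in> set p" "p \<noteq> []" using Cons.prems by auto
    have "(hd p, x) \<in> (walk_arcs p)\<^sup>*" using Cons.IH xp by simp
    moreover have "walk_arcs p \<subseteq> walk_arcs (a # p)" using walk_arcs_Cons[OF xp(2)] by blast
    ultimately have "(hd p, x) \<in> (walk_arcs (a # p))\<^sup>*" using rtrancl_mono by blast
    moreover have "(a, hd p) \<in> walk_arcs (a # p)" using walk_arcs_Cons[OF xp(2)] by simp
    ultimately show ?thesis by (simp add: converse_rtrancl_into_rtrancl)
  qed
qed

lemma sym_E: "(a, b) \<in> (R \<union> R\<inverse>)\<^sup>* \<Longrightarrow> (b, a) \<in> (R \<union> R\<inverse>)\<^sup>*"
proof -
  assume "(a, b) \<in> (R \<union> R\<inverse>)\<^sup>*"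
  then have "(b, a) \<in> ((R \<union> R\<inverse>)\<inverse>)\<^sup>*" by (simp add: rtrancl_converse)
  moreover have "(R \<union> R\<inverse>)\<inverse> = R \<union> R\<inverse>" by auto
  ultimately show ?thesis by simp
qed

context dsc begin

abbreviation "W2 \<equiv> newW S W"
abbreviation "Ha2 \<equiv> H_arcs V B W2"
abbreviation "Hv2 \<equiv> H_verts V B W2"
abbreviation "E2 \<equiv> (Ha2 \<union> Ha2\<inverse>)\<^sup>*"

lemma Vij_V: "Vij x t \<in> V \<Longrightarrow> t \<in> {1..m}"
  unfolding dsc_verts_def idx_I_def by auto

lemma horiz_V: assumes t: "t \<in> {1..m}" shows "set (horiz_path S t) \<subseteq> V" "walk_arcs (horiz_path S t) \<subseteq> A"
proof -
  show "set (horiz_path S t) \<subseteq> V"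
  proof
    fix x assume x: "x \<in> set (horiz_path S t)"
    show "x \<in> V"
    proof (cases "x = Zc")
      case True then show ?thesis unfolding dsc_verts_def by simp
    next
      case False
      then obtain y where y: "y \<in> S t" "x = Vij y t" using x finS[OF t] by (auto simp: horiz_path_def)
      have yn: "y \<in> {1..n}" using y(1) t S_sub by blast
      have "t \<in> idx_I m S y" using y(1) t unfolding idx_I_def by simp
      then show ?thesis using vert_in_V[OF yn] y(2) by (simp add: vert_path_def)
    qed
  qed
  show "walk_arcs (horiz_path S t) \<subseteq> A" unfolding dsc_arcs_def using t by blast
qed

lemma vert_A: "i \<in> {1..n} \<Longrightarrow> j \<in> idx_I m S i \<Longrightarrow> walk_arcs (vert_path i j) \<subseteq> A"
  unfolding dsc_arcs_def by blast

lemma src_cases: "v \<in> src \<Longrightarrow> (\<exists>i\<in>{1..n}. \<exists>j\<in>idx_I m S i. v = Uij i j) \<or> (\<exists>l\<in>{1..k}. v = Zl l)"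
  unfolding dsc_sources_def by auto

lemma zl_case: assumes "Zl l \<in> src"
  shows "(\<exists>t\<in>{1..m}. W2 (Zl l) 0 = Zl l # horiz_path S t) \<or> W2 (Zl l) 0 = [Zl l, Zc]"
proof (cases "2 < length (W (Zl l) 0)")
  case True
  have sV: "set (W (Zl l) 0) \<subseteq> V" using valid[OF assms] unfolding is_walk_def by blast
  show ?thesis
  proof (cases "W (Zl l) 0 ! 2")
    case (Vij x t)
    then have "Vij x t \<in> V" using sV True by (metis nth_mem subsetD)
    then have "t \<in> {1..m}" by (rule Vij_V)
    then show ?thesis by (intro disjI1 bexI[of _ t]) (simp_all add: newW_def True Vij)
  qed (use True in \<open>simp_all add: newW_def\<close>)
next
  case False then show ?thesis by (simp add: newW_def)
qed

lemma new_valid: assumes v: "v \<in> src" shows "is_walk V A (W2 v 0) \<and> hd (W2 v 0) = v"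
  using src_cases[OF v]
proof
  assume "\<exists>i\<in>{1..n}. \<exists>j\<in>idx_I m S i. v = Uij i j"
  then obtain i j where ij: "i \<in> {1..n}" "j \<in> idx_I m S i" "v = Uij i j" by blast
  have "set (vert_path i j) \<subseteq> V" using vert_in_V[OF ij(1,2)] by blast
  then show ?thesis using ij vert_A[OF ij(1,2)] unfolding is_walk_iff
    by (simp add: newW_def vert_path_def)
next
  assume "\<exists>l\<in>{1..k}. v = Zl l"
  then obtain l where l: "l \<in> {1..k}" "v = Zl l" by blast
  have lV: "Zl l \<in> V" "Zc \<in> V" using l unfolding dsc_verts_def by auto
  have lA: "(Zl l, Zc) \<in> A" using l unfolding dsc_arcs_def by blast
  have zc: "(\<exists>t\<in>{1..m}. W2 (Zl l) 0 = Zl l # horiz_path S t) \<or> W2 (Zl l) 0 = [Zl l, Zc]"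
    using zl_case[of l] v l(2) by simp
  have "is_walk V A (W2 (Zl l) 0) \<and> hd (W2 (Zl l) 0) = Zl l"
  using zc proof
    assume "\<exists>t\<in>{1..m}. W2 (Zl l) 0 = Zl l # horiz_path S t"
    then obtain t where t: "t \<in> {1..m}" "W2 (Zl l) 0 = Zl l # horiz_path S t" by blast
    have ne: "horiz_path S t \<noteq> []" by (simp add: horiz_path_def)
    have "hd (horiz_path S t) = Zc" by (simp add: horiz_path_def)
    then show ?thesis using t l lV lA horiz_V[OF t(1)] unfolding is_walk_iff
      by (simp add: walk_arcs_Cons[OF ne])
  next
    assume "W2 (Zl l) 0 = [Zl l, Zc]"
    then show ?thesis using l lV lA unfolding is_walk_iff by (simp add: walk_arcs_def)
  qed
  then show ?thesis using l(2) by simp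
qed

lemma new_sub: assumes v: "v \<in> src" shows "walk_arcs (W2 v 0) \<subseteq> Ha2" "set (W2 v 0) \<subseteq> Hv2"
proof -
  have 2: "v \<in> V" "0 \<in> {..<B v}" using v src_V B_src by auto
  show "walk_arcs (W2 v 0) \<subseteq> Ha2"
  proof
    fix e assume he: "e \<in> walk_arcs (W2 v 0)"
    show "e \<in> Ha2" unfolding H_arcs_def by (rule UN_I[OF 2(1)], rule UN_I[OF 2(2)], rule he)
  qed
  show "set (W2 v 0) \<subseteq> Hv2"
  proof
    fix e assume he: "e \<in> set (W2 v 0)"
    show "e \<in> Hv2" unfolding H_verts_def by (rule UN_I[OF 2(1)], rule UN_I[OF 2(2)], rule he)
  qed
qed

lemma new_conn: assumes v: "v \<in> src" and x: "x \<in> set (W2 v 0)" shows "(v, x) \<in> E2" "x \<in> Hv2"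
proof -
  have ne: "W2 v 0 \<noteq> []" and hd: "hd (W2 v 0) = v" using new_valid[OF v] unfolding is_walk_def by auto
  have "(v, x) \<in> (walk_arcs (W2 v 0))\<^sup>*" using walk_conn[OF ne x] hd by simp
  moreover have "(walk_arcs (W2 v 0))\<^sup>* \<subseteq> E2"
    by (rule rtrancl_mono) (use new_sub(1)[OF v] in blast)
  ultimately show "(v, x) \<in> E2" by (rule subsetD[rotated])
  show "x \<in> Hv2" using new_sub(2)[OF v] x by blast
qed

lemma conn_vert:
  assumes i: "i \<in> {1..n}" and j: "j \<in> idx_I m S i" and x: "x \<in> set (vert_path i j)"
  shows "x \<in> Hv2 \<and> (Zc, x) \<in> E2"
proof -
  obtain t where t: "t \<in> Tset" "i \<in> S t" using cov_all[OF i] unfolding cov_def by blast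
  have tm: "t \<in> {1..m}" and len: "1 < length (horiz_path S t)" using t(1) unfolding Tset_def by auto
  obtain l where l: "Zl l \<in> src" "2 < length (W (Zl l) 0)" "W (Zl l) 0 ! 2 = horiz_path S t ! 1"
    using T_zl[OF t(1)] by blast
  obtain y where y: "horiz_path S t ! 1 = Vij y t"
    using horiz_nth[of S t 1, OF finS[OF tm]] len by auto
  have w2l: "W2 (Zl l) 0 = Zl l # horiz_path S t" using l(2,3) y by (simp add: newW_def)
  have "Vij i t \<in> set (horiz_path S t)" using t(2) finS[OF tm] by (simp add: horiz_path_def)
  then have c1: "(Zl l, Vij i t) \<in> E2" using new_conn(1)[OF l(1)] w2l by simp
  have c2: "(Zl l, Zc) \<in> E2" using new_conn(1)[OF l(1)] w2l by (simp add: horiz_path_def)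
  have tI: "t \<in> idx_I m S i" using tm t(2) unfolding idx_I_def by simp
  have s1: "Uij i t \<in> src" using i tI unfolding dsc_sources_def by blast
  have s2: "Uij i j \<in> src" using i j unfolding dsc_sources_def by blast
  have w1: "W2 (Uij i t) 0 = vert_path i t" "W2 (Uij i j) 0 = vert_path i j" by (simp_all add: newW_def)
  have c3: "(Uij i t, Vij i t) \<in> E2" "(Uij i t, Ui i) \<in> E2"
    using new_conn(1)[OF s1] w1 by (simp_all add: vert_path_def)
  have c4: "(Uij i j, Ui i) \<in> E2" "(Uij i j, x) \<in> E2"
    using new_conn(1)[OF s2] w1 x by (simp_all add: vert_path_def)
  have "(Zc, Zl l) \<in> E2" using sym_E[OF c2] .
  also have "(Zl l, Vij i t) \<in> E2" by (rule c1)
  also have "(Vij i t, Uij i t) \<in> E2" using sym_E[OF c3(1)] .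
  also have "(Uij i t, Ui i) \<in> E2" by (rule c3(2))
  also have "(Ui i, Uij i j) \<in> E2" using sym_E[OF c4(1)] .
  also have "(Uij i j, x) \<in> E2" by (rule c4(2))
  finally have "(Zc, x) \<in> E2" .
  moreover have "x \<in> Hv2" using new_conn(2)[OF s2] w1 x by simp
  ultimately show ?thesis by simp
qed

lemma zl_conn: assumes l: "l \<in> {1..k}" shows "Zl l \<in> Hv2 \<and> Zc \<in> Hv2 \<and> (Zl l, Zc) \<in> E2"
proof -
  have s: "Zl l \<in> src" using l unfolding dsc_sources_def by auto
  have "Zc \<in> set (W2 (Zl l) 0)" using zl_case[OF s] by (auto simp: horiz_path_def)
  then have 1: "Zc \<in> Hv2" "(Zl l, Zc) \<in> E2" using new_conn[OF s] by auto
  have "Zl l \<in> set (W2 (Zl l) 0)" by (simp add: newW_def)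
  then have "Zl l \<in> Hv2" using new_conn(2)[OF s] by simp
  then show ?thesis using 1 by simp
qed

lemma conn_all: assumes k: "1 \<le> k" and x: "x \<in> V" shows "x \<in> Hv2 \<and> (Zc, x) \<in> E2"
proof -
  have "x \<in> Ui ` {1..n} \<or> x \<in> (\<Union>i\<in>{1..n}. \<Union>j\<in>idx_I m S i. {Uij i j, Uij' i j, Vij i j, Vij' i j}) \<or> x = Zc \<or> x \<in> Zl ` {1..k}"
    using x unfolding dsc_verts_def by blast
  then have "(\<exists>i\<in>{1..n}. x = Ui i) \<or> (\<exists>i\<in>{1..n}. \<exists>j\<in>idx_I m S i. x \<in> set (vert_path i j)) \<or> x = Zc \<or> (\<exists>l\<in>{1..k}. x = Zl l)"
  proof (elim disjE)
    assume "x \<in> (\<Union>i\<in>{1..n}. \<Union>j\<in>idx_I m S i. {Uij i j, Uij' i j, Vij i j, Vij' i j})"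
    then obtain i j where "i \<in> {1..n}" "j \<in> idx_I m S i" "x \<in> {Uij i j, Uij' i j, Vij i j, Vij' i j}" by blast
    moreover then have "x \<in> set (vert_path i j)" by (auto simp: vert_path_def)
    ultimately show ?thesis by blast
  qed blast+
  then show ?thesis
  proof (elim disjE)
    assume "\<exists>i\<in>{1..n}. x = Ui i"
    then obtain i where i: "i \<in> {1..n}" "x = Ui i" by blast
    obtain t where t: "t \<in> Tset" "i \<in> S t" using cov_all[OF i(1)] unfolding cov_def by blast
    have "t \<in> idx_I m S i" using t unfolding Tset_def idx_I_def by auto
    then show ?thesis using conn_vert[OF i(1)] i(2) by (simp add: vert_path_def)
  next
    assume "\<exists>i\<in>{1..n}. \<exists>j\<in>idx_I m S i. x \<in> set (vert_path i j)"
    then show ?thesis using conn_vert by blast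
  next
    assume "x = Zc"
    then show ?thesis using zl_conn[of 1] k by simp
  next
    assume "\<exists>l\<in>{1..k}. x = Zl l"
    then obtain l where l: "l \<in> {1..k}" "x = Zl l" by blast
    have "(Zl l, Zc) \<in> E2" using zl_conn[OF l(1)] by blast
    then have "(Zc, Zl l) \<in> E2" by (rule sym_E)
    then show ?thesis using zl_conn[OF l(1)] l(2) by blast
  qed
qed

end


theorem lemma6:
  fixes n m k :: nat and S :: "nat \<Rightarrow> nat set"
  assumes S_sub: "\<forall>t\<in>{1..m}. S t \<subseteq> {1..n}"
    and S_cover: "(\<Union>t\<in>{1..m}. S t) = {1..n}"
    and k_ge: "1 \<le> k" and k_le: "k \<le> m"
    and pos: "\<exists>W. st_solution (dsc_verts n m S k) (dsc_arcs n m S k) dsc_F (dsc_B n m S k) W"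
  shows "\<exists>W. st_solution (dsc_verts n m S k) (dsc_arcs n m S k) dsc_F (dsc_B n m S k) W \<and>
             (\<forall>v\<in>dsc_sources n m S k. distinct (W v 0)) \<and>
             (\<forall>i\<in>{1..n}. \<forall>j\<in>idx_I m S i. set (W (Uij i j) 0) \<subseteq> comp_C m S i)"
proof -
  obtain W where sol: "st_solution (dsc_verts n m S k) (dsc_arcs n m S k) dsc_F (dsc_B n m S k) W"
    using pos by blast
  interpret d: dsc n m k S W using S_sub sol by (rule dsc.intro)
  let ?V = "dsc_verts n m S k"
  let ?W = "newW S W"
  have c1: "\<forall>v\<in>?V. \<forall>r<dsc_B n m S k v. is_walk ?V (dsc_arcs n m S k) (?W v r) \<and> hd (?W v r) = v"
  proof (intro ballI allI impI)
    fix v r assume "v \<in> ?V" "r < dsc_B n m S k v"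
    then have "v \<in> dsc_sources n m S k" "r = 0" using d.B_le by auto
    then show "is_walk ?V (dsc_arcs n m S k) (?W v r) \<and> hd (?W v r) = v" using d.new_valid by simp
  qed
  have c2: "\<forall>x\<in>?V. \<forall>y\<in>?V. dsc_F x = 1 \<and> dsc_F y = 1 \<longrightarrow>
        x \<in> H_verts ?V (dsc_B n m S k) ?W \<and> y \<in> H_verts ?V (dsc_B n m S k) ?W \<and>
        (x, y) \<in> (H_arcs ?V (dsc_B n m S k) ?W \<union> (H_arcs ?V (dsc_B n m S k) ?W)\<inverse>)\<^sup>*"
  proof (intro ballI impI)
    fix x y assume x: "x \<in> ?V" and y: "y \<in> ?V"
    note cx = d.conn_all[OF k_ge x] and cy = d.conn_all[OF k_ge y]
    have e1: "(Zc, x) \<in> (H_arcs ?V (dsc_B n m S k) ?W \<union> (H_arcs ?V (dsc_B n m S k) ?W)\<inverse>)\<^sup>*"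
      using cx by (rule conjunct2)
    have e2: "(Zc, y) \<in> (H_arcs ?V (dsc_B n m S k) ?W \<union> (H_arcs ?V (dsc_B n m S k) ?W)\<inverse>)\<^sup>*"
      using cy by (rule conjunct2)
    have "(x, y) \<in> (H_arcs ?V (dsc_B n m S k) ?W \<union> (H_arcs ?V (dsc_B n m S k) ?W)\<inverse>)\<^sup>*"
      by (rule rtrancl_trans[OF sym_E[OF e1] e2])
    moreover have "x \<in> H_verts ?V (dsc_B n m S k) ?W" using cx by (rule conjunct1)
    moreover have "y \<in> H_verts ?V (dsc_B n m S k) ?W" using cy by (rule conjunct1)
    ultimately show "x \<in> H_verts ?V (dsc_B n m S k) ?W \<and> y \<in> H_verts ?V (dsc_B n m S k) ?W \<and>
        (x, y) \<in> (H_arcs ?V (dsc_B n m S k) ?W \<union> (H_arcs ?V (dsc_B n m S k) ?W)\<inverse>)\<^sup>*"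
      by (intro conjI)
  qed
  have sol': "st_solution ?V (dsc_arcs n m S k) dsc_F (dsc_B n m S k) ?W"
    unfolding st_solution_def by (rule conjI[OF c1 c2])
  have dist: "\<forall>v\<in>dsc_sources n m S k. distinct (?W v 0)"
  proof
    fix v assume v: "v \<in> dsc_sources n m S k"
    show "distinct (?W v 0)"
    using d.src_cases[OF v]
    proof (elim disjE)
      assume "\<exists>i\<in>{1..n}. \<exists>j\<in>idx_I m S i. v = Uij i j"
      then obtain i j where "v = Uij i j" by blast
      then show ?thesis by (simp add: newW_def vert_path_def)
    next
      assume "\<exists>l\<in>{1..k}. v = Zl l"
      then obtain l where l: "v = Zl l" by blast
      have nz: "Zl l \<notin> set (horiz_path S t)" for t by (auto simp: horiz_path_def)
      have "(\<exists>t\<in>{1..m}. ?W (Zl l) 0 = Zl l # horiz_path S t) \<or> ?W (Zl l) 0 = [Zl l, Zc]"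
        using d.zl_case[of l] v l by blast
      then show ?thesis
      proof (elim disjE)
        assume "\<exists>t\<in>{1..m}. ?W (Zl l) 0 = Zl l # horiz_path S t"
        then obtain t where "?W (Zl l) 0 = Zl l # horiz_path S t" by blast
        then show ?thesis using nz[of t] horiz_distinct[of S t] l by simp
      next
        assume "?W (Zl l) 0 = [Zl l, Zc]" then show ?thesis using l by simp
      qed
    qed
  qed
  have cont: "\<forall>i\<in>{1..n}. \<forall>j\<in>idx_I m S i. set (?W (Uij i j) 0) \<subseteq> comp_C m S i"
  proof (intro ballI)
    fix i j assume j: "j \<in> idx_I m S i"
    have e: "?W (Uij i j) 0 = vert_path i j" by (simp add: newW_def)
    have "set (vert_path i j) \<subseteq> comp_C m S i" unfolding comp_C_def by (rule UN_upper[OF j])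
    then show "set (?W (Uij i j) 0) \<subseteq> comp_C m S i" by (subst e)
  qed
  show ?thesis by (rule exI[of _ ?W], intro conjI, rule sol', rule dist, rule cont)
qed

end
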